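(* Let $\sigma>0$, $\bar\gamma>0$, $c_\infty\ge0$, and let $\kappa:[0,\infty)\to\mathbb{R}$ be $L_\kappa$-Lipschitz with $\kappa(0)=0$; set $\tau_\gamma(w)=w+\gamma\kappa(w)$. Let $(\gamma_n)\subset(0,\bar\gamma]$ with $\gamma_n\to0$, $w_0\ge0$, let $(W^{(n)}_k)_k$ be the Markov chain with $W^{(n)}_0=w_0$ and kernel $Q_{\gamma_n}$, where $$Q_\gamma(w,A)=\delta_0(A)\int_{\mathbb{R}}\bar p_{\sigma^2\gamma}(\tau_\gamma(w)+\gamma c_\infty,g)\varphi(g)dg+\int_{\mathbb{R}}\mathbb{1}_A(\tau_\gamma(w)+\gamma c_\infty-2\sigma\gamma^{1/2}g)\{1-\bar p_{\sigma^2\gamma}(\tau_\gamma(w)+\gamma c_\infty,g)\}\varphi(g)dg,$$ $\bar p_{\sigma^2\gamma}(a,g)=1\wedge\varphi_{\sigma^2\gamma}(a-\sigma\sqrt\gamma g)/\varphi_{\sigma^2\gamma}(\sigma\sqrt\gamma g)$, and let $\mu_n$ be the law on $\mathbb W=C([0,\infty),\mathbb{R})$ (uniform topology on compacts) of the linear interpolation $\mathbf W^{(n)}_t=W^{(n)}_{\lfloor t/\gamma_n\rfloor}+\{W^{(n)}_{\lceil t/\gamma_n\rceil}-W^{(n)}_{\lfloor t/\gamma_n\rfloor}\}\{t/\gamma_n-\lfloor t/\gamma_n\rfloor\}$. Let $\mu_\infty$ be a limit point (for convergence in distribution) of $(\mu_n)_{n\in\mathbb{N}}$. Then $\mu_\infty$-almost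 everywhere, $\inf_{t\in[0,\infty)}\mathrm W_t\ge0$, where $(\mathrm W_t)$ is the canonical process on $\mathbb W$.
   Context: $\varphi$ is the standard normal density and $\varphi_s(t)=(2\pi s)^{-1/2}e^{-t^2/(2s)}$. *)

theory Defs
  imports "HOL-Probability.Probability"
begin

definition phi_var :: "real \<Rightarrow> real \<Rightarrow> real" where
  "phi_var s t = exp (- t\<^sup>2 / (2 * s)) / sqrt (2 * pi * s)"

definition pbar :: "real \<Rightarrow> real \<Rightarrow> real \<Rightarrow> real \<Rightarrow> real" where
  "pbar \<sigma> \<gamma> a g = min 1 (phi_var (\<sigma>\<^sup>2 * \<gamma>) (a - \<sigma> * sqrt \<gamma> * g)
                            / phi_var (\<sigma>\<^sup>2 * \<gamma>) (\<sigma> * sqrt \<gamma> * g))"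

definition tau :: "(real \<Rightarrow> real) \<Rightarrow> real \<Rightarrow> real \<Rightarrow> real" where
  "tau \<kappa> \<gamma> w = w + \<gamma> * \<kappa> w"

definition Qker :: "real \<Rightarrow> real \<Rightarrow> (real \<Rightarrow> real) \<Rightarrow> real \<Rightarrow> real \<Rightarrow> real set \<Rightarrow> real" where
  "Qker \<sigma> c_inf \<kappa> \<gamma> w A =
     (let a = tau \<kappa> \<gamma> w + \<gamma> * c_inf in
        indicator A 0 * (\<integral>g. pbar \<sigma> \<gamma> a g * std_normal_density g \<partial>lborel)
      + (\<integral>g. indicator A (a - 2 * \<sigma> * sqrt \<gamma> * g) * (1 - pbar \<sigma> \<gamma> a g)
              * std_normal_density g \<partial>lborel))"

(* (X k)_k is a Markov chain on (P) with initial state w0 and transition kernel Q,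
   w.r.t. its natural filtration: for all Borel A, B_0..B_k,
   P(X_0 in B_0, ..., X_k in B_k, X_{k+1} in A) = E[1{X_0 in B_0,...,X_k in B_k} Q(X_k, A)] *)
definition markov_chain :: "'a measure \<Rightarrow> (nat \<Rightarrow> 'a \<Rightarrow> real) \<Rightarrow> real \<Rightarrow> (real \<Rightarrow> real set \<Rightarrow> real) \<Rightarrow> bool" where
  "markov_chain P X w0 Q \<longleftrightarrow>
     prob_space P \<and> (\<forall>k. X k \<in> borel_measurable P) \<and>
     (AE \<omega> in P. X 0 \<omega> = w0) \<and>
     (\<forall>k A B. A \<in> sets borel \<longrightarrow> (\<forall>i. B i \<in> sets borel) \<longrightarrow>
        measure P {\<omega> \<in> space P. (\<forall>i\<le>k. X i \<omega> \<in> B i) \<and> X (Suc k) \<omega> \<in> A}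
        = (\<integral>\<omega>. indicator {\<omega> \<in> space P. \<forall>i\<le>k. X i \<omega> \<in> B i} \<omega> * Q (X k \<omega>) A \<partial>P))"

(* Path space W = C([0,oo), R); a path is represented as a function real => real
   continuous on [0,oo) and (normalised) equal to 0 on (-oo,0). *)
definition Wspace :: "(real \<Rightarrow> real) set" where
  "Wspace = {f. continuous_on {0..} f \<and> (\<forall>t<0. f t = 0)}"

(* topology of uniform convergence on compacts: generated by the sets
   {g. sup_{[0,k]} |g - f| < e}, f in W *)
definition Wtop :: "(real \<Rightarrow> real) topology" where
  "Wtop = subtopology
     (topology_generated_by
        {{g. \<forall>t\<in>{0..real k}. \<bar>g t - f t\<bar> < e} | f k e. f \<in> Wspace \<and> e > 0})
     Wspace"

definition borel_of :: "'a topology \<Rightarrow> 'a measure" where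
  "borel_of T = sigma (topspace T) {U. openin T U}"

definition interp :: "real \<Rightarrow> (nat \<Rightarrow> real) \<Rightarrow> real \<Rightarrow> real" where
  "interp \<gamma> x t = (if t < 0 then 0 else
      x (nat \<lfloor>t / \<gamma>\<rfloor>) + (x (nat \<lceil>t / \<gamma>\<rceil>) - x (nat \<lfloor>t / \<gamma>\<rfloor>)) * (t / \<gamma> - of_int \<lfloor>t / \<gamma>\<rfloor>))"

definition weak_conv :: "'a topology \<Rightarrow> (nat \<Rightarrow> 'a measure) \<Rightarrow> 'a measure \<Rightarrow> bool" where
  "weak_conv T \<mu> \<nu> \<longleftrightarrow>
     (\<forall>F. continuous_map T euclideanreal F \<and> bounded (F ` topspace T) \<longrightarrow>
        (\<lambda>n. \<integral>x. F x \<partial>\<mu> n) \<longlonglongrightarrow> (\<integral>x. F x \<partial>\<nu>))"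

end

theory Submission
  imports Defs
begin

lemma distr_emeasure_le:
  assumes "A \<in> sets N"
  shows "emeasure (distr M N f) A \<le> emeasure M (f -` A \<inter> space M)"
  unfolding distr_def emeasure_measure_of_conv
  using assms by (simp add: sets.sigma_sets_eq)

lemma pbar_one:
  assumes "\<sigma> > 0" "\<gamma> > 0" "a \<ge> 0" "a - 2 * \<sigma> * sqrt \<gamma> * g < 0"
  shows "pbar \<sigma> \<gamma> a g = 1"
proof -
  define s where "s = \<sigma> * sqrt \<gamma>"
  define v where "v = \<sigma>\<^sup>2 * \<gamma>"
  have v: "v > 0" using assms by (simp add: v_def)
  have "a * (a - 2 * s * g) \<le> 0" using assms by (simp add: s_def mult_nonneg_nonpos)
  hence sq: "(a - s * g)\<^sup>2 \<le> (s * g)\<^sup>2" by (simp add: power2_eq_square algebra_simps)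
  have "- (s * g)\<^sup>2 / (2 * v) \<le> - (a - s * g)\<^sup>2 / (2 * v)"
    using sq v by (simp add: divide_right_mono)
  hence "exp (- (s * g)\<^sup>2 / (2 * v)) \<le> exp (- (a - s * g)\<^sup>2 / (2 * v))" by simp
  hence "phi_var v (s * g) \<le> phi_var v (a - s * g)"
    unfolding phi_var_def using v by (simp add: divide_right_mono)
  moreover have "phi_var v (s * g) > 0" unfolding phi_var_def using v by simp
  ultimately have "phi_var v (a - s * g) / phi_var v (s * g) \<ge> 1" by simp
  thus ?thesis unfolding pbar_def s_def v_def by simp
qed

lemma Qker_neg_zero:
  assumes "\<sigma> > 0" "\<gamma> > 0" "tau \<kappa> \<gamma> w + \<gamma> * c \<ge> 0"
  shows "Qker \<sigma> c \<kappa> \<gamma> w {..<0} = 0"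
proof -
  define a where "a = tau \<kappa> \<gamma> w + \<gamma> * c"
  have "(\<lambda>g. indicator {..<0} (a - 2 * \<sigma> * sqrt \<gamma> * g) * (1 - pbar \<sigma> \<gamma> a g)
              * std_normal_density g) = (\<lambda>g. 0::real)"
  proof
    fix g
    show "indicator {..<0} (a - 2 * \<sigma> * sqrt \<gamma> * g) * (1 - pbar \<sigma> \<gamma> a g)
              * std_normal_density g = (0::real)"
      using pbar_one[of \<sigma> \<gamma> a g] assms a_def by (cases "a - 2 * \<sigma> * sqrt \<gamma> * g < 0") auto
  qed
  thus ?thesis unfolding Qker_def Let_def a_def[symmetric] by simp
qed

lemma eval_cont:
  assumes "t \<ge> 0"
  shows "continuous_map Wtop euclideanreal (\<lambda>f. f t)"
  unfolding continuous_map
proof safe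
  fix U :: "real set" assume "openin euclideanreal U"
  hence U: "open U" by simp
  show "openin Wtop {x \<in> topspace Wtop. x t \<in> U}"
  proof (subst openin_subopen, safe)
    fix f0 assume f0: "f0 \<in> topspace Wtop" "f0 t \<in> U"
    have f0W: "f0 \<in> Wspace" using f0 unfolding Wtop_def by simp
    obtain e where e: "e > 0" "ball (f0 t) e \<subseteq> U" using U f0 open_contains_ball by blast
    define k where "k = nat \<lceil>t\<rceil>"
    have tk: "t \<in> {0..real k}" using assms unfolding k_def by (simp add: real_nat_ceiling_ge)
    define B where "B = {g. \<forall>s\<in>{0..real k}. \<bar>g s - f0 s\<bar> < e}"
    have "openin (topology_generated_by
        {{g. \<forall>t\<in>{0..real k}. \<bar>g t - f t\<bar> < e} | f k e. f \<in> Wspace \<and> e > 0}) B"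
      unfolding openin_topology_generated_by_iff B_def
      by (rule generate_topology_on.Basis) (use f0W e in blast)
    hence oB: "openin Wtop (B \<inter> Wspace)" unfolding Wtop_def openin_subtopology by blast
    show "\<exists>T. openin Wtop T \<and> f0 \<in> T \<and> T \<subseteq> {x \<in> topspace Wtop. x t \<in> U}"
    proof (intro exI conjI)
      show "openin Wtop (B \<inter> Wspace)" by (rule oB)
      show "f0 \<in> B \<inter> Wspace" using f0W e unfolding B_def by simp
      show "B \<inter> Wspace \<subseteq> {x \<in> topspace Wtop. x t \<in> U}"
      proof
        fix g assume g: "g \<in> B \<inter> Wspace"
        have "\<bar>g t - f0 t\<bar> < e" using g tk unfolding B_def by blast
        hence "g t \<in> ball (f0 t) e" by (simp add: dist_real_def abs_minus_commute)
        hence "g t \<in> U" using e by blast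
        moreover have "g \<in> topspace Wtop" using openin_subset[OF oB] g by blast
        ultimately show "g \<in> {x \<in> topspace Wtop. x t \<in> U}" by simp
      qed
    qed
  qed
qed simp

lemma cont_meas:
  assumes "continuous_map T euclideanreal F"
  shows "F \<in> borel_measurable (borel_of T)"
proof (rule borel_measurableI)
  fix S :: "real set" assume "open S"
  hence "openin T {x \<in> topspace T. F x \<in> S}" using assms unfolding continuous_map by simp
  moreover have "F -` S \<inter> space (borel_of T) = {x \<in> topspace T. F x \<in> S}"
    unfolding borel_of_def by (auto simp: space_measure_of_conv)
  ultimately show "F -` S \<inter> space (borel_of T) \<in> sets (borel_of T)"
    unfolding borel_of_def using openin_subset
    by (auto simp: sets_measure_of_conv intro!: sigma_sets.Basic)
qed


lemma interp_nonneg: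
  assumes "\<gamma> > 0" "\<And>k. x k \<ge> 0"
  shows "interp \<gamma> x t \<ge> 0"
proof (cases "t < 0")
  case True thus ?thesis by (simp add: interp_def)
next
  case False
  define fr where "fr = t / \<gamma> - of_int \<lfloor>t / \<gamma>\<rfloor>"
  have f0: "fr \<ge> 0" "fr \<le> 1" unfolding fr_def by linarith+
  define a where "a = x (nat \<lfloor>t / \<gamma>\<rfloor>)"
  define b where "b = x (nat \<lceil>t / \<gamma>\<rceil>)"
  have "a \<ge> 0" "b \<ge> 0" using assms unfolding a_def b_def by auto
  have "interp \<gamma> x t = a * (1 - fr) + b * fr"
    using False unfolding interp_def fr_def[symmetric] a_def[symmetric] b_def[symmetric]
    by (simp add: algebra_simps)
  also have "\<dots> \<ge> 0" using \<open>a \<ge> 0\<close> \<open>b \<ge> 0\<close> f0 by simp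
  finally show ?thesis .
qed

lemma chain_nonneg:
  assumes mc: "markov_chain P X w0 Q" and w0: "w0 \<ge> 0"
    and Q: "\<And>w. w \<ge> 0 \<Longrightarrow> Q w {..<0} = 0"
  shows "AE \<omega> in P. \<forall>k. X k \<omega> \<ge> 0"
proof -
  have ps: "prob_space P" and meas[measurable]: "\<And>k. X k \<in> borel_measurable P"
    and X0: "AE \<omega> in P. X 0 \<omega> = w0"
    and mk: "\<And>k A B. A \<in> sets borel \<Longrightarrow> (\<forall>i. B i \<in> sets borel) \<Longrightarrow>
        measure P {\<omega> \<in> space P. (\<forall>i\<le>k. X i \<omega> \<in> B i) \<and> X (Suc k) \<omega> \<in> A}
        = (\<integral>\<omega>. indicator {\<omega> \<in> space P. \<forall>i\<le>k. X i \<omega> \<in> B i} \<omega> * Q (X k \<omega>) A \<partial>P)"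
    using mc unfolding markov_chain_def by auto
  interpret prob_space P by (rule ps)
  have step: "AE \<omega> in P. \<forall>i\<le>m. X i \<omega> \<ge> 0" for m
  proof (induction m)
    case 0 show ?case using X0 by eventually_elim (simp add: w0)
  next
    case (Suc m)
    define E where "E = {\<omega> \<in> space P. (\<forall>i\<le>m. X i \<omega> \<in> {0..}) \<and> X (Suc m) \<omega> \<in> {..<0::real}}"
    have "measure P E = (\<integral>\<omega>. indicator {\<omega> \<in> space P. \<forall>i\<le>m. X i \<omega> \<in> {0..}} \<omega> * Q (X m \<omega>) {..<0} \<partial>P)"
      unfolding E_def by (rule mk) auto
    also have "\<dots> = (\<integral>\<omega>. 0 \<partial>P)"
      by (rule Bochner_Integration.integral_cong) (auto simp: indicator_def Q)
    finally have m0: "measure P E = 0" by simp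
    have Es: "E = (\<Inter>i\<in>{..m}. X i -` {0..} \<inter> space P) \<inter> (X (Suc m) -` {..<0} \<inter> space P)"
      unfolding E_def by auto
    have Esets: "E \<in> events" unfolding Es by measurable
    have eE: "emeasure P E = 0" by (simp add: emeasure_eq_measure m0)
    have setE: "{\<omega> \<in> space P. \<not> \<not> ((\<forall>i\<le>m. X i \<omega> \<ge> 0) \<and> X (Suc m) \<omega> < 0)} = E"
      by (auto simp: E_def)
    have "AE \<omega> in P. \<not> ((\<forall>i\<le>m. X i \<omega> \<ge> 0) \<and> X (Suc m) \<omega> < 0)"
      using AE_iff_measurable[OF Esets setE] eE by simp
    with Suc.IH show ?case by eventually_elim (auto simp: le_Suc_eq)
  qed
  have "AE \<omega> in P. \<forall>k. X k \<omega> \<ge> 0"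
    unfolding AE_all_countable
  proof
    fix k show "AE \<omega> in P. X k \<omega> \<ge> 0" using step[of k] by eventually_elim auto
  qed
  thus ?thesis .
qed

lemma dense_nonneg:
  fixes f :: "real \<Rightarrow> real"
  assumes "continuous_on {0..} f" "\<forall>q\<in>\<rat> \<inter> {0..}. f q \<ge> 0" "t \<ge> 0"
  shows "f t \<ge> 0"
proof (rule ccontr)
  assume "\<not> f t \<ge> 0"
  hence ft: "f t < 0" by simp
  obtain d where d: "d > 0" "\<forall>x'\<in>{0..}. dist x' t < d \<longrightarrow> dist (f x') (f t) < - f t"
    using assms(1) assms(3) ft unfolding continuous_on_iff by (metis atLeast_iff neg_0_less_iff_less)
  obtain q where q: "q \<in> \<rat>" "t < q" "q < t + d" using Rats_dense_in_real[of t "t+d"] d by auto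
  have "dist (f q) (f t) < - f t" using d q assms(3) by (auto simp: dist_real_def)
  hence "f q < 0" by (auto simp: dist_real_def)
  moreover have "f q \<ge> 0" using assms(2) q assms(3) by auto
  ultimately show False by simp
qed

lemma distr_integral_zero:
  fixes F :: "(real \<Rightarrow> real) \<Rightarrow> real"
  assumes Fm: "F \<in> borel_measurable (borel_of Wtop)"
    and Xm: "\<And>k. X k \<in> borel_measurable P"
    and AEX: "AE \<omega> in P. \<forall>k. X k \<omega> \<ge> 0" and g: "\<gamma> > 0"
    and F0: "\<And>x. (\<And>k. x k \<ge> 0) \<Longrightarrow> F (interp \<gamma> x) = 0"
  shows "(\<integral>f. F f \<partial>distr P (borel_of Wtop) (\<lambda>\<omega>. interp \<gamma> (\<lambda>k. X k \<omega>))) = 0"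
proof -
  define M where "M = distr P (borel_of Wtop) (\<lambda>\<omega>. interp \<gamma> (\<lambda>k. X k \<omega>))"
  define G where "G = (\<lambda>\<omega>. interp \<gamma> (\<lambda>k. X k \<omega>))"
  have sets_mu: "sets M = sets (borel_of Wtop)" unfolding M_def by simp
  have Fm': "F \<in> borel_measurable M" using Fm measurable_cong_sets[OF sets_mu refl] by blast
  define S where "S = {f \<in> space M. F f \<noteq> 0}"
  have Ss: "S \<in> sets M" unfolding S_def using Fm' by measurable
  have Xm'[measurable]: "X k \<in> borel_measurable P" for k using Xm by blast
  define Z where "Z = {\<omega> \<in> space P. \<not> (\<forall>k. X k \<omega> \<ge> 0)}"
  have Zs: "Z \<in> sets P" unfolding Z_def by measurable
  have Z0: "emeasure P Z = 0"
    using AEX AE_iff_measurable[OF Zs] Z_def by simp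
  have "G -` S \<inter> space P \<subseteq> Z"
  proof
    fix \<omega> assume \<omega>: "\<omega> \<in> G -` S \<inter> space P"
    show "\<omega> \<in> Z"
    proof (rule ccontr)
      assume "\<omega> \<notin> Z"
      hence "\<forall>k. X k \<omega> \<ge> 0" using \<omega> unfolding Z_def by auto
      hence "F (G \<omega>) = 0" unfolding G_def by (intro F0) auto
      thus False using \<omega> unfolding S_def by simp
    qed
  qed
  hence "emeasure P (G -` S \<inter> space P) \<le> emeasure P Z"
    by (rule emeasure_mono[OF _ Zs])
  moreover have "emeasure M S \<le> emeasure P (G -` S \<inter> space P)"
    unfolding M_def G_def
    by (rule distr_emeasure_le) (use Ss sets_mu in simp)
  ultimately have "emeasure M S = 0" using Z0 by simp
  hence "S \<in> null_sets M" using Ss by (rule null_setsI)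
  hence "AE f in M. F f = 0" by (rule AE_I') (auto simp: S_def)
  hence "(\<integral>x. F x \<partial>M) = (\<integral>x. 0 \<partial>M)"
    by (intro integral_cong_AE Fm') auto
  thus ?thesis unfolding M_def by simp
qed

theorem proposition43:
  fixes \<sigma> \<gamma>bar c_inf L_\<kappa> w0 :: real
    and \<kappa> :: "real \<Rightarrow> real"
    and \<gamma> :: "nat \<Rightarrow> real"
    and P :: "nat \<Rightarrow> 'a measure"
    and X :: "nat \<Rightarrow> nat \<Rightarrow> 'a \<Rightarrow> real"
    and \<mu> :: "nat \<Rightarrow> (real \<Rightarrow> real) measure"
    and \<mu>_inf :: "(real \<Rightarrow> real) measure"
    and r :: "nat \<Rightarrow> nat"
  assumes "\<sigma> > 0" and "\<gamma>bar > 0" and "c_inf \<ge> 0"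
    and "L_\<kappa>-lipschitz_on {0..} \<kappa>" and "\<kappa> 0 = 0"
    and "\<And>n. \<gamma> n \<in> {0<..\<gamma>bar}" and "\<gamma> \<longlonglongrightarrow> 0"
    and "w0 \<ge> 0"
    and "\<And>n. markov_chain (P n) (X n) w0 (Qker \<sigma> c_inf \<kappa> (\<gamma> n))"
    and "\<And>n. \<mu> n = distr (P n) (borel_of Wtop) (\<lambda>\<omega>. interp (\<gamma> n) (\<lambda>k. X n k \<omega>))"
    and "strict_mono r"
    and "prob_space \<mu>_inf" and "sets \<mu>_inf = sets (borel_of Wtop)"
    and "weak_conv Wtop (\<lambda>j. \<mu> (r j)) \<mu>_inf"
  shows "AE f in \<mu>_inf. \<forall>t\<in>{0..}. f t \<ge> 0"
proof -
  note A = assms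
  have L0: "L_\<kappa> \<ge> 0" using lipschitz_on_nonneg[OF A(4)] .
  have gpos: "\<gamma> n > 0" for n using A(6)[of n] by simp
  have "eventually (\<lambda>n. \<gamma> n < 1 / (L_\<kappa> + 1)) sequentially"
    using order_tendstoD(2)[OF A(7)] L0 by simp
  then obtain N where N: "\<And>n. n \<ge> N \<Longrightarrow> \<gamma> n < 1 / (L_\<kappa> + 1)"
    unfolding eventually_sequentially by blast
  have gL: "\<gamma> n * L_\<kappa> \<le> 1" if "n \<ge> N" for n
  proof -
    have "\<gamma> n * (L_\<kappa> + 1) < 1" using N[OF that] L0 by (simp add: pos_less_divide_eq)
    thus ?thesis using gpos[of n] by (simp add: algebra_simps)
  qed
  have chainAE: "AE \<omega> in P n. \<forall>k. X n k \<omega> \<ge> 0" if "n \<ge> N" for n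
  proof (rule chain_nonneg[OF A(9) A(8)])
    fix w :: real assume w: "w \<ge> 0"
    have "dist (\<kappa> w) (\<kappa> 0) \<le> L_\<kappa> * dist w 0" by (rule lipschitz_onD[OF A(4)]) (use w in auto)
    hence "\<kappa> w \<ge> - L_\<kappa> * w" using A(5) w by (simp add: dist_real_def abs_le_iff)
    hence "\<gamma> n * \<kappa> w \<ge> \<gamma> n * (- L_\<kappa> * w)" using gpos[of n] mult_left_mono[of "-(L_\<kappa> * w)" "\<kappa> w" "\<gamma> n"] by simp
    moreover have "\<gamma> n * L_\<kappa> * w \<le> w" using gL[OF that] w using mult_right_mono[of "\<gamma> n * L_\<kappa>" 1 w] by simp
    moreover have "\<gamma> n * c_inf \<ge> 0" using gpos[of n] A(3) by simp
    ultimately have "tau \<kappa> (\<gamma> n) w + \<gamma> n * c_inf \<ge> 0" unfolding tau_def by (simp add: algebra_simps)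
    thus "Qker \<sigma> c_inf \<kappa> (\<gamma> n) w {..<0} = 0" by (rule Qker_neg_zero[OF A(1) gpos])
  qed
  have evalAE: "AE f in \<mu>_inf. f t \<ge> 0" if t: "t \<ge> 0" for t
  proof -
    define F where "F = (\<lambda>f::real\<Rightarrow>real. min 1 (max 0 (- f t)))"
    have Fc: "continuous_map Wtop euclideanreal F"
    proof -
      have "continuous_map euclideanreal euclideanreal (\<lambda>y::real. min 1 (max 0 (- y)))"
        by (auto simp: continuous_map_iff_continuous2 intro!: continuous_intros)
      from continuous_map_compose[OF eval_cont[OF t] this] show ?thesis
        by (simp add: F_def o_def)
    qed
    have Fb: "bounded (F ` topspace Wtop)"
      unfolding bounded_iff F_def by (intro exI[of _ 1]) auto
    have Fm: "F \<in> borel_measurable (borel_of Wtop)" by (rule cont_meas[OF Fc])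
    have Fn: "(\<integral>x. F x \<partial>\<mu> n) = 0" if n: "n \<ge> N" for n
    proof -
      have Xm: "\<And>k. X n k \<in> borel_measurable (P n)" using A(9)[of n] unfolding markov_chain_def by blast
      have F0: "F (interp (\<gamma> n) x) = 0" if "\<And>k. x k \<ge> 0" for x
      proof -
        have "interp (\<gamma> n) x t \<ge> 0" by (rule interp_nonneg[OF gpos that])
        thus ?thesis unfolding F_def by simp
      qed
      show ?thesis unfolding A(10)[of n] by (rule distr_integral_zero[OF Fm Xm chainAE[OF n] gpos F0])
    qed
    have lim1: "(\<lambda>j. \<integral>x. F x \<partial>\<mu> (r j)) \<longlonglongrightarrow> (\<integral>x. F x \<partial>\<mu>_inf)"
      using A(14) Fc Fb unfolding weak_conv_def by blast
    have "eventually (\<lambda>j. (\<integral>x. F x \<partial>\<mu> (r j)) = 0) sequentially"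
      unfolding eventually_sequentially
    proof (intro exI allI impI)
      fix j assume "j \<ge> N"
      moreover have "r j \<ge> j" using A(11) by (rule strict_mono_imp_increasing)
      ultimately show "(\<integral>x. F x \<partial>\<mu> (r j)) = 0" by (intro Fn) simp
    qed
    hence lim2: "(\<lambda>j. \<integral>x. F x \<partial>\<mu> (r j)) \<longlonglongrightarrow> 0" by (rule tendsto_eventually)
    have I0: "(\<integral>x. F x \<partial>\<mu>_inf) = 0" using LIMSEQ_unique[OF lim1 lim2] .
    have fm: "finite_measure \<mu>_inf" using A(12) by (simp add: prob_space_def)
    have Fmi: "F \<in> borel_measurable \<mu>_inf" using Fm measurable_cong_sets[OF A(13) refl] by blast
    have Fint: "integrable \<mu>_inf F"
      by (rule finite_measure.integrable_const_bound[OF fm, where B=1]) (auto simp: F_def intro: Fmi[unfolded F_def])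
    have "AE x in \<mu>_inf. F x = 0"
      using integral_nonneg_eq_0_iff_AE[OF Fint] I0 by (simp add: F_def)
    thus ?thesis by eventually_elim (simp add: F_def)
  qed
  have cQ: "countable (\<rat> \<inter> {0::real..})" by (blast intro: countable_subset countable_rat)
  have AQ: "AE f in \<mu>_inf. \<forall>q\<in>\<rat> \<inter> {0..}. f q \<ge> 0"
    unfolding AE_ball_countable[OF cQ] using evalAE by auto
  have sp: "space \<mu>_inf \<subseteq> Wspace"
    using sets_eq_imp_space_eq[OF A(13)]
    by (simp add: borel_of_def space_measure_of_conv Wtop_def)
  have AW: "AE f in \<mu>_inf. f \<in> Wspace" using AE_space by eventually_elim (use sp in blast)
  from AQ AW show ?thesis
  proof eventually_elim
    case (elim f)
    show ?case using dense_nonneg[of f] elim by (auto simp: Wspace_def)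
  qed
qed

end
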